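(* Let $n\geqslant2$, $\lambda>0$, distinct points $p_1,\ldots,p_M\in\mathbb{Z}^n$ and positive integers $n_1,\ldots,n_M$ be given, and let $g=4\pi\sum_{j=1}^Mn_j\delta_{p_j}$. Let $\Omega_0\subset\mathbb{Z}^n$ be a finite set containing $\{p_j\}_{j=1}^M$ and let $\Omega$ be a finite connected subset with $\Omega_0\subset\Omega$. Fix $K>2\lambda$, let $u_0=0$ and for $k\geqslant1$ let $u_k:\overline\Omega\to\mathbb{R}$ be the (unique) solution of $$(\Delta-K)u_k=\lambda e^{u_{k-1}}(e^{u_{k-1}}-1)+g-Ku_{k-1}\ \text{ on }\Omega,\qquad u_k=0\ \text{ on }\delta\Omega.$$ Then there exists a real-valued function $u_\Omega$ on $\overline\Omega$ such that $u_k\to u_\Omega$ pointwise on $\overline\Omega$, and $u_\Omega$ satisfies $$\Delta u_\Omega=\lambda e^{u_\Omega}(e^{u_\Omega}-1)+g\ \text{ on }\Omega,\qquad u_\Omega=0\ \text{ on }\delta\Omega.$$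
   Context: $\mathbb{Z}^n$ is the integer lattice graph with $x\sim y$ iff $\sum_i|x_i-y_i|=1$. For a finite $\Omega\subset\mathbb{Z}^n$, $\delta\Omega=\{y\in\mathbb{Z}^n\setminus\Omega:\exists x\in\Omega,\ y\sim x\}$ and $\overline\Omega=\Omega\cup\delta\Omega$. For $u:\overline\Omega\to\mathbb{R}$ and $x\in\Omega$, $\Delta u(x)=\sum_{y\sim x}(u(y)-u(x))$. $\delta_p$ is the function equal to $1$ at $p$ and $0$ elsewhere. *)

theory Defs
  imports "HOL-Analysis.Analysis"
begin

text \<open>The integer lattice graph Z^n, with points int ^ 'n (n = CARD('n)).\<close>

definition lat_adj :: "int ^ 'n \<Rightarrow> int ^ 'n \<Rightarrow> bool" where
  "lat_adj x y \<longleftrightarrow> (\<Sum>i\<in>UNIV. \<bar>x $ i - y $ i\<bar>) = 1"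

definition lat_nbrs :: "int ^ 'n \<Rightarrow> (int ^ 'n) set" where
  "lat_nbrs x = {y. lat_adj x y}"

definition vboundary :: "(int ^ 'n) set \<Rightarrow> (int ^ 'n) set" where
  "vboundary \<Omega> = {y. y \<notin> \<Omega> \<and> (\<exists>x\<in>\<Omega>. lat_adj y x)}"

definition vclosure :: "(int ^ 'n) set \<Rightarrow> (int ^ 'n) set" where
  "vclosure \<Omega> = \<Omega> \<union> vboundary \<Omega>"

definition lat_laplacian :: "(int ^ 'n \<Rightarrow> real) \<Rightarrow> int ^ 'n \<Rightarrow> real" where
  "lat_laplacian u x = (\<Sum>y\<in>lat_nbrs x. u y - u x)"

definition lat_connected :: "(int ^ 'n) set \<Rightarrow> bool" where
  "lat_connected \<Omega> \<longleftrightarrow>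
     (\<forall>x\<in>\<Omega>. \<forall>y\<in>\<Omega>. (\<lambda>a b. a \<in> \<Omega> \<and> b \<in> \<Omega> \<and> lat_adj a b)\<^sup>*\<^sup>* x y)"

end

theory Submission
  imports Defs
begin

lemma lat_adj_sym: "lat_adj x y \<longleftrightarrow> lat_adj y x"
  unfolding lat_adj_def by (simp add: abs_minus_commute)

lemma lat_nbrs_finite: "finite (lat_nbrs (x :: int ^ 'n))"
proof -
  have sub: "(\<lambda>y. vec_nth y) ` lat_nbrs x \<subseteq> (\<Pi>\<^sub>E i \<in> UNIV. {x$i - 1 .. x$i + 1})"
  proof
    fix f assume "f \<in> (\<lambda>y. vec_nth y) ` lat_nbrs x"
    then obtain y where y: "lat_adj x y" "f = vec_nth y" by (auto simp: lat_nbrs_def)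
    have "\<bar>x $ i - y $ i\<bar> \<le> 1" for i
    proof -
      have "\<bar>x $ i - y $ i\<bar> \<le> (\<Sum>j\<in>UNIV. \<bar>x $ j - y $ j\<bar>)"
        by (rule member_le_sum) auto
      thus ?thesis using y(1) unfolding lat_adj_def by simp
    qed
    hence "y$i \<in> {x$i - 1 .. x$i + 1}" for i
      unfolding atLeastAtMost_iff by (metis abs_le_D1 abs_le_D2 diff_le_eq le_diff_eq minus_diff_eq add.commute)
    thus "f \<in> (\<Pi>\<^sub>E i \<in> UNIV. {x$i - 1 .. x$i + 1})" using y(2) unfolding PiE_UNIV_domain by blast
  qed
  have "inj_on (\<lambda>y. vec_nth y) (lat_nbrs x)" by (auto simp: inj_on_def vec_eq_iff)
  moreover have "finite (\<Pi>\<^sub>E i \<in> (UNIV::'n set). {x$i - 1 .. x$i + 1})"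
    by (rule finite_PiE) auto
  ultimately show ?thesis using sub inj_on_finite by blast
qed

lemma lat_nbrs_nonempty: "lat_nbrs (x :: int ^ 'n) \<noteq> {}"
proof -
  fix i :: 'n
  define e :: "int ^ 'n" where "e = (\<chi> j. if j = i then 1 else 0)"
  have "lat_adj x (x + e)" unfolding lat_adj_def e_def
    by (simp add: if_distrib cong: if_cong)
  thus ?thesis by (auto simp: lat_nbrs_def)
qed

lemma nbr_sq: assumes "lat_adj x (y :: int ^ 'n)"
  shows "(\<Sum>i\<in>UNIV. (y$i - x$i)^2) = 1"
proof -
  have "\<bar>x $ i - y $ i\<bar> \<le> 1" for i
  proof -
    have "\<bar>x $ i - y $ i\<bar> \<le> (\<Sum>j\<in>UNIV. \<bar>x $ j - y $ j\<bar>)"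
      by (rule member_le_sum) auto
    thus ?thesis using assms unfolding lat_adj_def by simp
  qed
  have sq: "d^2 = \<bar>d\<bar>" if "\<bar>d\<bar> \<le> 1" for d :: int
  proof -
    have "d = -1 \<or> d = 0 \<or> d = 1" using that by linarith
    thus ?thesis by auto
  qed
  have "(y$i - x$i)^2 = \<bar>x $ i - y $ i\<bar>" for i
    using sq[of "y$i - x$i"] \<open>\<And>i. \<bar>x $ i - y $ i\<bar> \<le> 1\<close>[of i] by (simp add: abs_minus_commute)
  thus ?thesis using assms unfolding lat_adj_def by simp
qed

lemma aux1: "(a::int) - c + (b - c) = a + b - 2 * c" by simp
lemma aux2: "(a::int)^2 + (2 * c - a)^2 - 2 * c^2 = 2 * (a - c)^2"
  by (simp add: power2_eq_square algebra_simps)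

definition qi :: "int ^ 'n \<Rightarrow> int" where "qi y = (\<Sum>i\<in>UNIV. (y$i)^2)"

lemma lap_qi: "(\<Sum>y\<in>lat_nbrs x. qi y - qi (x :: int ^ 'n)) = int (card (lat_nbrs x))"
proof -
  let ?N = "lat_nbrs x"
  let ?S = "(\<Sum>y\<in>?N. qi y - qi x)"
  have bij: "bij_betw (\<lambda>y. \<chi> i. 2 * x$i - y$i) ?N ?N"
  proof (rule bij_betw_byWitness[where f'="\<lambda>y. \<chi> i. 2 * x$i - y$i"])
    show "\<forall>a\<in>?N. (\<chi> i. 2 * x$i - (\<chi> i. 2 * x$i - a$i)$i) = a" by (simp add: vec_eq_iff)
    show "\<forall>a\<in>?N. (\<chi> i. 2 * x$i - (\<chi> i. 2 * x$i - a$i)$i) = a" by (simp add: vec_eq_iff)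
    have "lat_adj x (\<chi> i. 2 * x$i - y$i)" if "lat_adj x y" for y
      using that unfolding lat_adj_def by (simp add: abs_minus_commute algebra_simps)
    thus "(\<lambda>y. \<chi> i. 2 * x$i - y$i) ` ?N \<subseteq> ?N" "(\<lambda>y. \<chi> i. 2 * x$i - y$i) ` ?N \<subseteq> ?N"
      by (auto simp: lat_nbrs_def)
  qed
  have "?S = (\<Sum>y\<in>?N. qi (\<chi> i. 2 * x$i - y$i) - qi x)"
    using sum.reindex_bij_betw[OF bij, of "\<lambda>y. qi y - qi x"] by simp
  hence "2 * ?S = ?S + (\<Sum>y\<in>?N. qi (\<chi> i. 2 * x$i - y$i) - qi x)"
    by (metis mult_2)
  also have "\<dots> = (\<Sum>y\<in>?N. (qi y - qi x) + (qi (\<chi> i. 2 * x$i - y$i) - qi x))"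
    by (rule sum.distrib[symmetric])
  also have "\<dots> = (\<Sum>y\<in>?N. qi y + qi (\<chi> i. 2 * x$i - y$i) - 2 * qi x)"
    by (rule sum.cong[OF refl]) (rule aux1)
  also have "\<dots> = (\<Sum>y\<in>?N. 2)"
  proof (rule sum.cong[OF refl])
    fix y assume "y \<in> ?N"
    hence "(\<Sum>i\<in>UNIV. (y$i - x$i)^2) = 1" using nbr_sq by (auto simp: lat_nbrs_def)
    moreover have "qi y + qi (\<chi> i. 2 * x$i - y$i) - 2 * qi x = 2 * (\<Sum>i\<in>UNIV. (y$i - x$i)^2)"
    proof -
      have "qi y + qi (\<chi> i. 2 * x$i - y$i) - 2 * qi x
          = (\<Sum>i\<in>UNIV. (y$i)^2 + (2 * x$i - y$i)^2 - 2 * (x$i)^2)"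
        unfolding qi_def by (simp add: sum.distrib sum_subtractf sum_distrib_left)
      also have "\<dots> = (\<Sum>i\<in>UNIV. 2 * (y$i - x$i)^2)"
        by (rule sum.cong[OF refl]) (rule aux2)
      also have "\<dots> = 2 * (\<Sum>i\<in>UNIV. (y$i - x$i)^2)" by (simp add: sum_distrib_left)
      finally show ?thesis .
    qed
    ultimately show "qi y + qi (\<chi> i. 2 * x$i - y$i) - 2 * qi x = 2" by simp
  qed
  finally show ?thesis by simp
qed


lemma maxp:
  fixes z :: "int ^ 'n \<Rightarrow> real"
  assumes fin: "finite \<Omega>" and K: "K > 0"
    and eq: "\<forall>x\<in>\<Omega>. lat_laplacian z x - K * z x \<ge> 0"
    and bd: "\<forall>y\<in>vboundary \<Omega>. z y \<le> 0"
  shows "\<forall>x\<in>\<Omega>. z x \<le> 0"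
proof (rule ccontr)
  assume "\<not> ?thesis"
  then obtain x1 where x1: "x1 \<in> \<Omega>" "z x1 > 0" by auto
  define mm where "mm = Max (z ` \<Omega>)"
  have "mm \<in> z ` \<Omega>" unfolding mm_def using fin x1 by (intro Max_in) auto
  then obtain x0 where x0: "x0 \<in> \<Omega>" "z x0 = mm" by auto
  have mx: "\<forall>x\<in>\<Omega>. z x \<le> mm" unfolding mm_def using fin by auto
  have mpos: "mm > 0" using x1 mx by force
  have "lat_laplacian z x0 \<le> 0" unfolding lat_laplacian_def
  proof (rule sum_nonpos)
    fix y assume "y \<in> lat_nbrs x0"
    hence adj: "lat_adj y x0" by (simp add: lat_nbrs_def lat_adj_sym)
    show "z y - z x0 \<le> 0"
    proof (cases "y \<in> \<Omega>")
      case True thus ?thesis using mx x0 by auto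
    next
      case False
      hence "y \<in> vboundary \<Omega>" using adj x0 by (auto simp: vboundary_def)
      thus ?thesis using bd x0 mpos by force
    qed
  qed
  moreover have "K * z x0 > 0" using K mpos x0 by simp
  ultimately show False using eq x0 by force
qed

lemma Fmono:
  fixes lam K a b :: real
  assumes lam: "lam > 0" and K: "K \<ge> lam" and ab: "a \<le> b" and b: "b \<le> 0"
  shows "lam * exp b * (exp b - 1) - K * b \<le> lam * exp a * (exp a - 1) - K * a"
proof -
  have A: "exp a \<le> exp b" using ab by simp
  have B1: "exp b \<le> 1" using b by simp
  have Apos: "exp a > 0" by simp
  have "exp b - exp a = exp b * (1 - exp (a - b))" by (simp add: algebra_simps exp_diff)
  also have "\<dots> \<le> 1 - exp (a - b)"
    using B1 ab mult_right_mono[of "exp b" 1 "1 - exp (a - b)"] by simp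
  also have "\<dots> \<le> b - a" using exp_ge_add_one_self[of "a - b"] by linarith
  finally have d: "exp b - exp a \<le> b - a" .
  have "lam * exp b * (exp b - 1) - lam * exp a * (exp a - 1)
        = lam * ((exp b - exp a) * (exp a + exp b - 1))" by (simp add: algebra_simps)
  also have "\<dots> \<le> lam * ((exp b - exp a) * 1)"
  proof -
    have h1: "exp a + exp b - 1 \<le> 1" using A B1 by linarith
    have h2: "0 \<le> exp b - exp a" using A by linarith
    have "(exp b - exp a) * (exp a + exp b - 1) \<le> (exp b - exp a) * 1"
      by (rule mult_left_mono[OF h1 h2])
    thus ?thesis using lam by (rule mult_left_mono[OF _ less_imp_le])
  qed
  also have "\<dots> \<le> lam * (b - a)" using d lam by simp
  also have "\<dots> \<le> K * (b - a)" using K ab by (intro mult_right_mono) auto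
  finally show ?thesis by (simp add: algebra_simps)
qed

lemma aux3: "((p::real) - q) - (r - s) = (p - r) - (q - s)" by simp

lemma lap_diff: "lat_laplacian (\<lambda>y. a y - b y) x = lat_laplacian a x - lat_laplacian b x"
proof -
  have "(\<Sum>y\<in>lat_nbrs x. (a y - b y) - (a x - b x)) = (\<Sum>y\<in>lat_nbrs x. (a y - a x) - (b y - b x))"
    by (rule sum.cong[OF refl]) (rule aux3)
  thus ?thesis unfolding lat_laplacian_def by (simp only: sum_subtractf)
qed

theorem lemma3p2:
  fixes lam K :: real and M :: nat
    and p :: "nat \<Rightarrow> int ^ 'n" and m :: "nat \<Rightarrow> nat"
    and g :: "int ^ 'n \<Rightarrow> real"
    and \<Omega>0 \<Omega> :: "(int ^ 'n) set"
    and u :: "nat \<Rightarrow> int ^ 'n \<Rightarrow> real"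
  assumes n2: "CARD('n) \<ge> 2"
    and lam: "lam > 0"
    and M1: "M \<ge> 1"
    and p_dist: "inj_on p {..<M}"
    and m_pos: "\<forall>j<M. m j > 0"
    and g_def: "\<forall>x. g x = 4 * pi * (\<Sum>j<M. real (m j) * (if x = p j then 1 else 0))"
    and fin0: "finite \<Omega>0"
    and p_in: "\<forall>j<M. p j \<in> \<Omega>0"
    and fin: "finite \<Omega>"
    and conn: "lat_connected \<Omega>"
    and sub: "\<Omega>0 \<subseteq> \<Omega>"
    and K: "K > 2 * lam"
    and u0: "\<forall>x\<in>vclosure \<Omega>. u 0 x = 0"
    and u_eq: "\<forall>k\<ge>1. \<forall>x\<in>\<Omega>.
        lat_laplacian (u k) x - K * u k x
          = lam * exp (u (k - 1) x) * (exp (u (k - 1) x) - 1) + g x - K * u (k - 1) x"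
    and u_bd: "\<forall>k\<ge>1. \<forall>x\<in>vboundary \<Omega>. u k x = 0"
  shows "\<exists>v :: int ^ 'n \<Rightarrow> real.
           (\<forall>x\<in>vclosure \<Omega>. (\<lambda>k. u k x) \<longlonglongrightarrow> v x)
         \<and> (\<forall>x\<in>\<Omega>. lat_laplacian v x = lam * exp (v x) * (exp (v x) - 1) + g x)
         \<and> (\<forall>x\<in>vboundary \<Omega>. v x = 0)"
proof -
  have Kpos: "K > 0" using K lam by linarith
  have Klam: "K \<ge> lam" using K lam by linarith
  define F where "F t = lam * exp t * (exp t - 1) - K * t" for t
  have F0: "F 0 = 0" by (simp add: F_def)
  have Fm: "F b \<le> F a" if "a \<le> b" "b \<le> 0" for a b
    unfolding F_def using Fmono[OF lam Klam that] .
  have Fle: "F t \<le> - K * t" if "t \<le> 0" for t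
  proof -
    have "exp t \<le> 1" using that by simp
    hence "lam * exp t * (exp t - 1) \<le> 0" using lam
      by (simp add: mult_nonneg_nonpos)
    thus ?thesis by (simp add: F_def)
  qed
  have Om_cl: "\<Omega> \<subseteq> vclosure \<Omega>" and bd_cl: "vboundary \<Omega> \<subseteq> vclosure \<Omega>"
    by (auto simp: vclosure_def)
  have nb_cl: "lat_nbrs x \<subseteq> vclosure \<Omega>" if "x \<in> \<Omega>" for x
    using that by (auto simp: vclosure_def vboundary_def lat_nbrs_def lat_adj_sym)
  have cl_cases: "y \<in> \<Omega> \<or> y \<in> vboundary \<Omega>" if "y \<in> vclosure \<Omega>" for y
    using that by (auto simp: vclosure_def)
  have cl_fin: "finite (vclosure \<Omega>)"
  proof -
    have "vboundary \<Omega> \<subseteq> (\<Union>x\<in>\<Omega>. lat_nbrs x)"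
      by (auto simp: vboundary_def lat_nbrs_def lat_adj_sym)
    moreover have "finite (\<Union>x\<in>\<Omega>. lat_nbrs x)" using fin lat_nbrs_finite by blast
    ultimately show ?thesis using fin by (auto simp: vclosure_def intro: finite_subset)
  qed
  have ueq: "lat_laplacian (u (Suc k)) x - K * u (Suc k) x = F (u k x) + g x" if "x \<in> \<Omega>" for k x
    using u_eq that by (simp add: F_def)
  have ubd: "u k y = 0" if "y \<in> vboundary \<Omega>" for k y
    using u_bd u0 that bd_cl by (cases k) auto
  have L0: "lat_laplacian (u 0) x = 0" if "x \<in> \<Omega>" for x
    unfolding lat_laplacian_def
  proof (intro sum.neutral ballI)
    fix y assume "y \<in> lat_nbrs x"
    hence "y \<in> vclosure \<Omega>" using nb_cl[OF that] by blast
    hence "u 0 y = 0" using u0 by blast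
    moreover have "u 0 x = 0" using u0 Om_cl that by blast
    ultimately show "u 0 y - u 0 x = 0" by simp
  qed
  define G where "G = 4 * pi * (\<Sum>j<M. real (m j))"
  have g_nn: "g x \<ge> 0" for x unfolding g_def[rule_format]
    by (intro mult_nonneg_nonneg sum_nonneg) auto
  have g_le: "g x \<le> G" for x
    unfolding G_def g_def[rule_format] by (intro mult_left_mono sum_mono) auto
  have G_nn: "G \<ge> 0" using g_nn g_le order_trans by blast
  have mono: "\<forall>x\<in>vclosure \<Omega>. u (Suc k) x \<le> u k x \<and> u k x \<le> 0 \<and> u (Suc k) x \<le> 0" for k
  proof (induction k)
    case 0
    let ?z = "\<lambda>y. u 1 y - u 0 y"
    have "\<forall>x\<in>\<Omega>. lat_laplacian ?z x - K * ?z x \<ge> 0"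
    proof
      fix x assume x: "x \<in> \<Omega>"
      have "lat_laplacian ?z x - K * ?z x
         = (lat_laplacian (u (Suc 0)) x - K * u (Suc 0) x) - (lat_laplacian (u 0) x - K * u 0 x)"
        by (simp add: lap_diff algebra_simps)
      also have "\<dots> = g x" using ueq[OF x, of 0] L0[OF x] u0 x Om_cl F0 by auto
      finally show "lat_laplacian ?z x - K * ?z x \<ge> 0" using g_nn by simp
    qed
    moreover have "\<forall>y\<in>vboundary \<Omega>. ?z y \<le> 0" using ubd by simp
    ultimately have "\<forall>x\<in>\<Omega>. ?z x \<le> 0" using maxp[OF fin Kpos] by blast
    then show ?case using u0 ubd cl_cases by fastforce
  next
    case (Suc k)
    let ?z = "\<lambda>y. u (Suc (Suc k)) y - u (Suc k) y"
    have "\<forall>x\<in>\<Omega>. lat_laplacian ?z x - K * ?z x \<ge> 0"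
    proof
      fix x assume x: "x \<in> \<Omega>"
      have "lat_laplacian ?z x - K * ?z x
         = (lat_laplacian (u (Suc (Suc k))) x - K * u (Suc (Suc k)) x)
           - (lat_laplacian (u (Suc k)) x - K * u (Suc k) x)"
        by (simp add: lap_diff algebra_simps)
      also have "\<dots> = F (u (Suc k) x) - F (u k x)" using ueq[OF x, of "Suc k"] ueq[OF x, of k] by simp
      finally show "lat_laplacian ?z x - K * ?z x \<ge> 0"
        using Fm[of "u (Suc k) x" "u k x"] Suc.IH x Om_cl by auto
    qed
    moreover have "\<forall>y\<in>vboundary \<Omega>. ?z y \<le> 0" using ubd by simp
    ultimately have "\<forall>x\<in>\<Omega>. ?z x \<le> 0" using maxp[OF fin Kpos] by blast
    then show ?case using Suc.IH ubd cl_cases by fastforce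
  qed
  define R where "R = (\<Sum>y\<in>vclosure \<Omega>. real_of_int (qi y))"
  define w :: "int ^ 'n \<Rightarrow> real" where "w y = G * (real_of_int (qi y) - R)" for y
  have qi_nn: "qi y \<ge> 0" for y :: "int ^ 'n" unfolding qi_def by (auto intro: sum_nonneg)
  have w_np: "w y \<le> 0" if "y \<in> vclosure \<Omega>" for y
  proof -
    have "real_of_int (qi y) \<le> R" unfolding R_def
      using cl_fin that qi_nn by (intro member_le_sum) auto
    thus ?thesis unfolding w_def using G_nn by (simp add: mult_nonneg_nonpos)
  qed
  have lap_w: "lat_laplacian w x \<ge> g x" for x
  proof -
    have "lat_laplacian w x = (\<Sum>y\<in>lat_nbrs x. G * real_of_int (qi y - qi x))"
      unfolding lat_laplacian_def w_def by (rule sum.cong) (auto simp: algebra_simps)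
    also have "\<dots> = G * real_of_int (\<Sum>y\<in>lat_nbrs x. qi y - qi x)"
      by (simp add: sum_distrib_left)
    also have "\<dots> = G * real (card (lat_nbrs x))" by (simp add: lap_qi)
    finally have e: "lat_laplacian w x = G * real (card (lat_nbrs x))" .
    have "card (lat_nbrs x) \<ge> 1" using lat_nbrs_finite lat_nbrs_nonempty
      by (metis One_nat_def Suc_leI card_gt_0_iff)
    hence "G * 1 \<le> G * real (card (lat_nbrs x))" using G_nn by (intro mult_left_mono) auto
    thus ?thesis using e g_le[of x] by simp
  qed
  have lower: "\<forall>x\<in>vclosure \<Omega>. w x \<le> u k x" for k
  proof (induction k)
    case 0 then show ?case using u0 w_np by simp
  next
    case (Suc k)
    let ?z = "\<lambda>y. w y - u (Suc k) y"
    have "\<forall>x\<in>\<Omega>. lat_laplacian ?z x - K * ?z x \<ge> 0"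
    proof
      fix x assume x: "x \<in> \<Omega>"
      have xc: "x \<in> vclosure \<Omega>" using x Om_cl by auto
      have "lat_laplacian ?z x - K * ?z x
         = (lat_laplacian w x - K * w x) - (lat_laplacian (u (Suc k)) x - K * u (Suc k) x)"
        by (simp add: lap_diff algebra_simps)
      also have "\<dots> = lat_laplacian w x - K * w x - F (u k x) - g x" using ueq[OF x, of k] by simp
      finally have e: "lat_laplacian ?z x - K * ?z x = lat_laplacian w x - K * w x - F (u k x) - g x" .
      have "F (u k x) \<le> F (w x)" using Fm[of "w x" "u k x"] Suc.IH mono[of k] xc by auto
      also have "\<dots> \<le> - K * w x" using Fle w_np xc by auto
      finally show "lat_laplacian ?z x - K * ?z x \<ge> 0" using e lap_w[of x] by simp
    qed
    moreover have "\<forall>y\<in>vboundary \<Omega>. ?z y \<le> 0" using ubd w_np bd_cl by auto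
    ultimately have "\<forall>x\<in>\<Omega>. ?z x \<le> 0" using maxp[OF fin Kpos] by blast
    then show ?case using ubd w_np cl_cases by fastforce
  qed
  define v where "v x = lim (\<lambda>k. u k x)" for x
  have conv: "(\<lambda>k. u k x) \<longlonglongrightarrow> v x" if "x \<in> vclosure \<Omega>" for x
  proof -
    have "decseq (\<lambda>k. u k x)" using mono that by (intro decseq_SucI) auto
    moreover have "\<forall>i. w x \<le> u i x" using lower that by auto
    ultimately obtain L where "(\<lambda>k. u k x) \<longlonglongrightarrow> L" using decseq_convergent by blast
    thus ?thesis unfolding v_def using limI by (metis)
  qed
  have eqv: "lat_laplacian v x = lam * exp (v x) * (exp (v x) - 1) + g x" if x: "x \<in> \<Omega>" for x
  proof -
    have xc: "x \<in> vclosure \<Omega>" using x Om_cl by auto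
    have "(\<lambda>k. lat_laplacian (u (Suc k)) x - K * u (Suc k) x) \<longlonglongrightarrow> lat_laplacian v x - K * v x"
      unfolding lat_laplacian_def
      using nb_cl[OF x] xc
      by (intro tendsto_intros LIMSEQ_Suc conv) auto
    moreover have "(\<lambda>k. lat_laplacian (u (Suc k)) x - K * u (Suc k) x) \<longlonglongrightarrow> F (v x) + g x"
      unfolding ueq[OF x] F_def using xc by (intro tendsto_intros conv)
    ultimately have "lat_laplacian v x - K * v x = F (v x) + g x" by (rule LIMSEQ_unique)
    thus ?thesis by (simp add: F_def)
  qed
  have bdv: "v y = 0" if "y \<in> vboundary \<Omega>" for y
    unfolding v_def using ubd[OF that] by simp
  show ?thesis using conv eqv bdv by blast
qed

end
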